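(* Let $G$ be a semisimple compact Lie group and $H$ a closed subgroup, with all notation as in the context. Let $D$ be a self-adjoint unbounded operator with compact resolvent on $\mathcal{H}_\rho$ such that $D e_{(\gamma,i)}=d_\gamma e_{(\gamma,i)}$ for all $\gamma\in\Gamma$, $1\le i\le N_\gamma$ (with $d_\gamma\in\mathbb{R}$), and such that $(\mathcal{O}(G/H),\mathcal{H}_\rho,D)$ is a spectral triple. Assume that there exist a finite set $R\subset\mathcal{O}(G/H)$ and $c>0$ such that the growth graph $\mathcal{G}_R^c$ has a root $\gamma_0$. Then $|d_\gamma|=O(\ell_{\gamma_0}(\gamma))$, i.e. there is a constant $C>0$ with $|d_\gamma|\le C\,\ell_{\gamma_0}(\gamma)$ for all $\gamma\in\Gamma$.
   Context: Let $G$ be a semisimple compact Lie group and $H\subset G$ a closed subgroup. Let $C(G/H)=\{a\in C(G): a(hg)=a(g)\ \forall h\in H,g\in G\}$, with the action $\tau:C(G/H)\to C(G/H)\otimes C(G)$ given by the coproduct, $\tau(a)(x,g)=a(xg)$. This action is ergodic; let $\rho$ be its unique invariant state (the Haar state of $C(G)$ restricted to $C(G/H)$), and $(\mathcal{H}_\rho,\pi_\rho,\eta_\rho)$ the associated GNS representation. Let $\mathcal{O}(G)$ be the span of matrix coefficients of finite-dimensional irreducible unitary representations of $G$ and $\mathcal{O}(G/H)=\{a\in C(G/H):\tau(a)\in C(G/H)\otimes_{alg}\mathcal{O}(G)\}$. Then $\mathcal{O}(G/H)=\bigoplus_{\gamma\in\Gamma}W_\gamma$, where $\Gamma=\{(\lambda,j):\lambda\in\widehat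 G,\ 1\le j\le I_\lambda\}$, $I_\lambda$ is the (finite) multiplicity with which the irreducible representation of highest weight $\lambda$ occurs in $C(G/H)$, and $W_{(\lambda,j)}$ are the corresponding irreducible subspaces (Podleś decomposition). Let $N_\gamma=\dim W_\gamma$, fix for each $\gamma$ a basis $\{a_{(\gamma,i)}:1\le i\le N_\gamma\}$ of $W_\gamma$, and put $e_{(\gamma,i)}=\eta_\rho(a_{(\gamma,i)})\in\mathcal{H}_\rho$; these vectors span a dense subspace and form a basis of $\eta_\rho(\mathcal{O}(G/H))$. Growth graph: for a finite set $R=\{r_1,\dots,r_k\}\subset\mathcal{O}(G/H)$ and $c>0$, $\mathcal{G}_R^c$ is the directed graph with vertex set $\Gamma$ and an edge $\gamma\to\gamma'$ iff for some $j$, $i$, $i'$ one has $\pi_\rho(r_j)e_{(\gamma,i)}=e_{(\gamma',i')}$ and $\|e_{(\gamma,i)}\|/\|e_{(\gamma',i')}\|<c$. A vertex $\gamma_0$ is a root if every $\gamma\in\Gamma$ can be reached from $\gamma_0$ by a directed path. For a root $\gamma_0$, the length function is $\ell_{\gamma_0}(\gamma_0)=1$ and, for $\gamma\neq\gamma_0$, $\ell_{\gamma_0}(\gamma)$ is the length of a shortest directed path from $\gamma_0$ to $\gamma$. A spectral triple $(\mathcal{O}(G/H),\mathcal{H}_\rho,D)$ means: $D$ is self-adjoint with compact resolvent, and for every $a\in\mathcal{O}(G/H)$ the commutator $[D,\pi_\rho(a)]$ is densely defined and extends to a bounded operator. *)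

theory Defs
  imports "HOL-Analysis.Analysis"
begin

text \<open>Complex Hilbert spaces are modelled as real Hilbert spaces (type class
  real_inner + complete_space) equipped with a complex structure J (multiplication
  by the imaginary unit).  The complex inner product is then
  inner x y + i * inner x (J y); a map is complex-linear iff it is real-linear and
  commutes with J.\<close>

definition complex_structure :: "('h::real_inner \<Rightarrow> 'h) \<Rightarrow> bool" where
  "complex_structure J \<longleftrightarrow> linear J \<and> (\<forall>x. J (J x) = - x) \<and>
     (\<forall>x y. inner (J x) (J y) = inner x y)"

definition complex_linear_operator ::
    "('h::real_inner \<Rightarrow> 'h) \<Rightarrow> 'h set \<Rightarrow> ('h \<Rightarrow> 'h) \<Rightarrow> bool" where
  "complex_linear_operator J Dm T \<longleftrightarrow> subspace Dm \<and> J ` Dm \<subseteq> Dm \<and>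
     (\<forall>x\<in>Dm. \<forall>y\<in>Dm. T (x + y) = T x + T y) \<and>
     (\<forall>x\<in>Dm. \<forall>a. T (a *\<^sub>R x) = a *\<^sub>R T x) \<and>
     (\<forall>x\<in>Dm. T (J x) = J (T x))"

text \<open>Self-adjoint: densely defined, symmetric, and the adjoint has the same domain
  (T* \<subseteq> T).  For complex-linear operators, testing with the real part of the complex
  inner product is equivalent to testing with the complex inner product.\<close>
definition self_adjoint_op ::
    "('h::real_inner \<Rightarrow> 'h) \<Rightarrow> 'h set \<Rightarrow> ('h \<Rightarrow> 'h) \<Rightarrow> bool" where
  "self_adjoint_op J Dm T \<longleftrightarrow> complex_linear_operator J Dm T \<and>
     closure Dm = UNIV \<and>
     (\<forall>x\<in>Dm. \<forall>y\<in>Dm. inner (T x) y = inner x (T y)) \<and>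
     (\<forall>y z. (\<forall>x\<in>Dm. inner (T x) y = inner x z) \<longrightarrow> y \<in> Dm \<and> T y = z)"

text \<open>Compact resolvent: the resolvent (T + i)^{-1} exists as a bounded operator
  H \<rightarrow> Dm and is compact (maps the unit ball to a relatively compact set).\<close>
definition compact_resolvent ::
    "('h::real_normed_vector \<Rightarrow> 'h) \<Rightarrow> 'h set \<Rightarrow> ('h \<Rightarrow> 'h) \<Rightarrow> bool" where
  "compact_resolvent J Dm T \<longleftrightarrow> (\<exists>Rv. bounded_linear Rv \<and> (\<forall>x. Rv x \<in> Dm \<and> T (Rv x) + J (Rv x) = x) \<and>
     (\<forall>x\<in>Dm. Rv (T x + J x) = x) \<and> compact (closure (Rv ` ball 0 1)))"

definition bounded_commutator ::
    "'h set \<Rightarrow> ('h::real_normed_vector \<Rightarrow> 'h) \<Rightarrow> ('h \<Rightarrow> 'h) \<Rightarrow> bool" where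
  "bounded_commutator Dm T P \<longleftrightarrow>
     (let cd = {x\<in>Dm. P x \<in> Dm} in closure cd = UNIV \<and>
        (\<exists>B. bounded_linear B \<and> (\<forall>x\<in>cd. B x = T (P x) - P (T x))))"

definition spectral_triple ::
    "('h::{real_inner,complete_space} \<Rightarrow> 'h) \<Rightarrow> 'a set \<Rightarrow> ('a \<Rightarrow> 'h \<Rightarrow> 'h) \<Rightarrow> 'h set \<Rightarrow> ('h \<Rightarrow> 'h) \<Rightarrow> bool" where
  "spectral_triple J A \<pi> Dm T \<longleftrightarrow> self_adjoint_op J Dm T \<and> compact_resolvent J Dm T \<and>
     (\<forall>a\<in>A. bounded_commutator Dm T (\<pi> a))"

definition growth_edges ::
    "'g set \<Rightarrow> ('g \<Rightarrow> nat) \<Rightarrow> ('g \<Rightarrow> nat \<Rightarrow> 'h::real_normed_vector) \<Rightarrow> ('a \<Rightarrow> 'h \<Rightarrow> 'h)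
      \<Rightarrow> 'a set \<Rightarrow> real \<Rightarrow> ('g \<times> 'g) set" where
  "growth_edges \<Gamma> N e \<pi> R c = {(\<gamma>, \<gamma>'). \<gamma> \<in> \<Gamma> \<and> \<gamma>' \<in> \<Gamma> \<and>
     (\<exists>r\<in>R. \<exists>i\<in>{1..N \<gamma>}. \<exists>i'\<in>{1..N \<gamma>'}. \<pi> r (e \<gamma> i) = e \<gamma>' i' \<and>
        norm (e \<gamma> i) / norm (e \<gamma>' i') < c)}"

definition is_root :: "'g set \<Rightarrow> ('g \<times> 'g) set \<Rightarrow> 'g \<Rightarrow> bool" where
  "is_root V E v0 \<longleftrightarrow> v0 \<in> V \<and> (\<forall>v\<in>V. (v0, v) \<in> E\<^sup>*)"

definition path_length :: "('g \<times> 'g) set \<Rightarrow> 'g \<Rightarrow> 'g \<Rightarrow> nat" where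
  "path_length E v0 v = (if v = v0 then 1 else (LEAST n. (v0, v) \<in> E ^^ n))"

end

theory Submission
  imports Defs
begin

theorem proposition2p3:
  fixes J :: "'h::{real_inner,complete_space} \<Rightarrow> 'h"
    and A :: "'a set" and \<pi> :: "'a \<Rightarrow> 'h \<Rightarrow> 'h"
    and \<Gamma> :: "'g set" and N :: "'g \<Rightarrow> nat" and e :: "'g \<Rightarrow> nat \<Rightarrow> 'h"
    and Dm :: "'h set" and D :: "'h \<Rightarrow> 'h" and d :: "'g \<Rightarrow> real"
    and R :: "'a set" and c :: real and \<gamma>0 :: 'g
  assumes J: "complex_structure J"
    and pi_bounded: "\<forall>a\<in>A. bounded_linear (\<pi> a) \<and> (\<forall>x. \<pi> a (J x) = J (\<pi> a x))"
    and Gamma_countable: "countable \<Gamma>"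
    and N_pos: "\<forall>\<gamma>\<in>\<Gamma>. N \<gamma> \<ge> 1"
    and e_inj: "inj_on (\<lambda>(\<gamma>, i). e \<gamma> i) (SIGMA \<gamma>:\<Gamma>. {1..N \<gamma>})"
    and e_indep: "independent ((\<lambda>(\<gamma>, i). e \<gamma> i) ` (SIGMA \<gamma>:\<Gamma>. {1..N \<gamma>})
                     \<union> (\<lambda>(\<gamma>, i). J (e \<gamma> i)) ` (SIGMA \<gamma>:\<Gamma>. {1..N \<gamma>}))"
    and e_dense: "closure (span ((\<lambda>(\<gamma>, i). e \<gamma> i) ` (SIGMA \<gamma>:\<Gamma>. {1..N \<gamma>})
                     \<union> (\<lambda>(\<gamma>, i). J (e \<gamma> i)) ` (SIGMA \<gamma>:\<Gamma>. {1..N \<gamma>}))) = UNIV"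
    and e_dom: "\<forall>\<gamma>\<in>\<Gamma>. \<forall>i\<in>{1..N \<gamma>}. e \<gamma> i \<in> Dm"
    and D_eig: "\<forall>\<gamma>\<in>\<Gamma>. \<forall>i\<in>{1..N \<gamma>}. D (e \<gamma> i) = d \<gamma> *\<^sub>R e \<gamma> i"
    and triple: "spectral_triple J A \<pi> Dm D"
    and R_fin: "finite R" and R_sub: "R \<subseteq> A"
    and c_pos: "c > 0"
    and root: "is_root \<Gamma> (growth_edges \<Gamma> N e \<pi> R c) \<gamma>0"
  shows "\<exists>C>0. \<forall>\<gamma>\<in>\<Gamma>. \<bar>d \<gamma>\<bar> \<le> C * real (path_length (growth_edges \<Gamma> N e \<pi> R c) \<gamma>0 \<gamma>)"
proof -
  define E where "E = growth_edges \<Gamma> N e \<pi> R c"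
  have key: "\<forall>r\<in>R. \<exists>K>0. \<forall>x. x \<in> Dm \<and> \<pi> r x \<in> Dm \<longrightarrow> norm (D (\<pi> r x) - \<pi> r (D x)) \<le> norm x * K"
  proof
    fix r assume r: "r \<in> R"
    then have "bounded_commutator Dm D (\<pi> r)" using triple R_sub unfolding spectral_triple_def by blast
    then obtain B where B: "bounded_linear B" "\<forall>x\<in>{x\<in>Dm. \<pi> r x \<in> Dm}. B x = D (\<pi> r x) - \<pi> r (D x)"
      unfolding bounded_commutator_def Let_def by blast
    obtain K where K: "K > 0" "\<forall>x. norm (B x) \<le> norm x * K" using bounded_linear.pos_bounded[OF B(1)] by blast
    show "\<exists>K>0. \<forall>x. x \<in> Dm \<and> \<pi> r x \<in> Dm \<longrightarrow> norm (D (\<pi> r x) - \<pi> r (D x)) \<le> norm x * K"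
      proof (intro exI[of _ K] conjI allI impI)
      fix x assume x: "x \<in> Dm \<and> \<pi> r x \<in> Dm"
      then have "B x = D (\<pi> r x) - \<pi> r (D x)" using B(2) by blast
      then show "norm (D (\<pi> r x) - \<pi> r (D x)) \<le> norm x * K" using K(2)[rule_format, of x] by simp
    qed (use K in auto)
  qed
  then obtain K where K: "\<forall>r\<in>R. K r > 0 \<and> (\<forall>x. x \<in> Dm \<and> \<pi> r x \<in> Dm \<longrightarrow> norm (D (\<pi> r x) - \<pi> r (D x)) \<le> norm x * K r)"
    by metis
  define M where "M = c * (\<Sum>r\<in>R. K r)"
  have M0: "M \<ge> 0" unfolding M_def using K c_pos by (simp add: sum_nonneg less_imp_le)
  have edge: "\<bar>d g' - d g\<bar> \<le> M" if eg: "(g, g') \<in> E" for g g'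
  proof -
    from eg obtain r i i' where g: "g \<in> \<Gamma>" "g' \<in> \<Gamma>" and r: "r \<in> R" and i: "i \<in> {1..N g}" and i': "i' \<in> {1..N g'}"
      and pe: "\<pi> r (e g i) = e g' i'" and nc: "norm (e g i) / norm (e g' i') < c"
      unfolding E_def growth_edges_def by blast
    have "e g' i' \<in> (\<lambda>(\<gamma>, i). e \<gamma> i) ` (SIGMA \<gamma>:\<Gamma>. {1..N \<gamma>})" using g i' by force
    then have inS: "e g' i' \<in> ((\<lambda>(\<gamma>, i). e \<gamma> i) ` (SIGMA \<gamma>:\<Gamma>. {1..N \<gamma>})
                     \<union> (\<lambda>(\<gamma>, i). J (e \<gamma> i)) ` (SIGMA \<gamma>:\<Gamma>. {1..N \<gamma>}))" by (rule UnI1)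
    have ne: "e g' i' \<noteq> 0"
    proof
      assume "e g' i' = 0"
      then show False using inS e_indep dependent_zero by metis
    qed
    then have np: "norm (e g' i') > 0" by simp
    have lx: "norm (e g i) < c * norm (e g' i')" using nc np by (simp add: divide_less_eq)
    have bl: "bounded_linear (\<pi> r)" using pi_bounded R_sub r by blast
    have dom: "e g i \<in> Dm \<and> \<pi> r (e g i) \<in> Dm" using e_dom g i i' pe by auto
    have "D (\<pi> r (e g i)) = d g' *\<^sub>R e g' i'" using pe D_eig g i' by simp
    moreover have "\<pi> r (D (e g i)) = d g *\<^sub>R e g' i'"
      using pe D_eig g i linear_scale[OF bounded_linear.linear[OF bl]] by simp
    ultimately have "D (\<pi> r (e g i)) - \<pi> r (D (e g i)) = (d g' - d g) *\<^sub>R e g' i'"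
      by (simp add: scaleR_diff_left)
    then have "norm ((d g' - d g) *\<^sub>R e g' i') \<le> norm (e g i) * K r"
    proof -
      have "norm (D (\<pi> r (e g i)) - \<pi> r (D (e g i))) \<le> norm (e g i) * K r"
        using K r dom by blast
      then show ?thesis using \<open>D (\<pi> r (e g i)) - \<pi> r (D (e g i)) = (d g' - d g) *\<^sub>R e g' i'\<close> by simp
    qed
    then have "\<bar>d g' - d g\<bar> * norm (e g' i') \<le> norm (e g i) * K r" by simp
    also have "\<dots> \<le> c * norm (e g' i') * K r" using lx K r by (simp add: less_imp_le)
    finally have "\<bar>d g' - d g\<bar> \<le> c * K r" using np by (simp add: mult.commute mult.left_commute)
    also have "\<dots> \<le> M" unfolding M_def using K r c_pos R_fin
      by (intro mult_left_mono member_le_sum) (auto simp: less_imp_le)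
    finally show ?thesis .
  qed
  have pathb: "\<bar>d g\<bar> \<le> \<bar>d \<gamma>0\<bar> + M * real n" if "(\<gamma>0, g) \<in> E ^^ n" for n g
    using that
  proof (induction n arbitrary: g)
    case 0 then show ?case using M0 by simp
  next
    case (Suc n)
    then obtain h where h: "(\<gamma>0, h) \<in> E ^^ n" "(h, g) \<in> E" by auto
    have "\<bar>d h\<bar> \<le> \<bar>d \<gamma>0\<bar> + M * real n" using Suc.IH h(1) by blast
    moreover have "\<bar>d g - d h\<bar> \<le> M" using edge h(2) by blast
    ultimately show ?case by (simp add: algebra_simps)
  qed
  show ?thesis
  proof (intro exI[of _ "\<bar>d \<gamma>0\<bar> + M + 1"] conjI ballI)
    show "\<bar>d \<gamma>0\<bar> + M + 1 > 0" using M0 by simp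
    fix g assume g: "g \<in> \<Gamma>"
    show "\<bar>d g\<bar> \<le> (\<bar>d \<gamma>0\<bar> + M + 1) * real (path_length (growth_edges \<Gamma> N e \<pi> R c) \<gamma>0 g)"
    proof (cases "g = \<gamma>0")
      case True then show ?thesis using M0 by (simp add: path_length_def)
    next
      case False
      have "(\<gamma>0, g) \<in> E\<^sup>*" using root g unfolding is_root_def E_def by blast
      then obtain n where "(\<gamma>0, g) \<in> E ^^ n" using rtrancl_power by blast
      then have L: "(\<gamma>0, g) \<in> E ^^ (LEAST n. (\<gamma>0, g) \<in> E ^^ n)" by (rule LeastI)
      define l where "l = (LEAST n. (\<gamma>0, g) \<in> E ^^ n)"
      have Ll: "(\<gamma>0, g) \<in> E ^^ l" using L l_def by simp
      have l1: "l \<ge> 1" using Ll False by (cases l) auto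
      have pl: "path_length (growth_edges \<Gamma> N e \<pi> R c) \<gamma>0 g = l"
        using False unfolding path_length_def l_def E_def by simp
      have "\<bar>d g\<bar> \<le> \<bar>d \<gamma>0\<bar> + M * real l" using pathb Ll by blast
      also have "\<dots> \<le> (\<bar>d \<gamma>0\<bar> + M + 1) * real l"
      proof -
        have "real l \<ge> 1" using l1 by simp
        have "\<bar>d \<gamma>0\<bar> * 1 \<le> \<bar>d \<gamma>0\<bar> * real l" using \<open>real l \<ge> 1\<close> by (intro mult_left_mono) auto
        then have "M * real l + 0 \<le> M * real l + (\<bar>d \<gamma>0\<bar> + 1) * real l - \<bar>d \<gamma>0\<bar>"
          using \<open>real l \<ge> 1\<close> by (simp add: algebra_simps)
        then show ?thesis by (simp add: algebra_simps)
      qed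
      finally show ?thesis using pl by simp
    qed
  qed
qed

end
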